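(* Let $X=X_1\times\cdots\times X_r$ with $X_i$ smooth algebraic $k$-varieties, and $a(\mathbf T)=\sum_{\mathbf n\in\mathbb N^r}a_{\mathbf n}\mathbf T^{\mathbf n}\in\overline{\mathscr M}_X^{\hat\mu}[[\mathbf T]]$, $\mathbf T=(T_1,\dots,T_r)$. If $a(\mathbf T)$ is integrable, then for every ordered cell $\Delta\subset\mathbb N^r$ the series $a_\Delta(\mathbf T):=\sum_{\mathbf n\in\Delta}a_{\mathbf n}\mathbf T^{\mathbf n}$ is integrable.
   Context: $k$ is a field of characteristic zero; $\overline{\mathscr M}_X^{\hat\mu}$ is the monodromic Grothendieck ring of $X$-varieties with good $\hat\mu$-action, localized at $\mathbb L$ and at the elements $1-\mathbb L^n$ ($n\ge1$). A series is integrable if it lies in $\overline{\mathscr M}_X^{\hat\mu}[\mathbf T][(1-\mathbb L^m\mathbf T^{\mathbf n})^{-1}]_{m<0,\ \mathbf n\in\mathbb N^r\setminus\{0\}}\subset\overline{\mathscr M}_X^{\hat\mu}[[\mathbf T]]$. For integers $0=r_0<r_1<\cdots<r_s=r$, the basic ordered cell $\Delta_{(r_0,\dots,r_s)}$ is the set of $\mathbf n\in\mathbb N^r$ with $n_{r_{j-1}+1}=\cdots=n_{r_j}$ for each $j$ and $n_{r_{j-1}}<n_{r_j}$ for $2\le j\le s$. An ordered cell is the image of a basic ordered cell under a coordinate permutation $(n_1,\dots,n_r)\mapsto(n_{\rho(1)},\dots,n_{\rho(r)})$. *)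

theory Defs
  imports Main "HOL-Combinatorics.Permutations"
begin

text \<open>Multivariate formal power series in r variables T_1..T_r (0-based indices 0..r-1)
  with coefficients in a commutative ring 'a: functions from exponent vectors
  (nat => nat, vanishing outside {0..<r}) to 'a.\<close>

definition expvecs :: "nat \<Rightarrow> (nat \<Rightarrow> nat) set" where
  "expvecs r = {n. \<forall>i\<ge>r. n i = 0}"

definition is_series :: "nat \<Rightarrow> ((nat \<Rightarrow> nat) \<Rightarrow> 'a::zero) \<Rightarrow> bool" where
  "is_series r a \<longleftrightarrow> (\<forall>n. n \<notin> expvecs r \<longrightarrow> a n = 0)"

definition ps_times :: "nat \<Rightarrow> ((nat \<Rightarrow> nat) \<Rightarrow> 'a::comm_ring_1) \<Rightarrow> ((nat \<Rightarrow> nat) \<Rightarrow> 'a)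
    \<Rightarrow> ((nat \<Rightarrow> nat) \<Rightarrow> 'a)" where
  "ps_times r a b = (\<lambda>n. if n \<in> expvecs r then
       (\<Sum>p\<in>{p\<in>expvecs r. \<forall>i. p i \<le> n i}. a p * b (\<lambda>i. n i - p i)) else 0)"

definition ps_one :: "(nat \<Rightarrow> nat) \<Rightarrow> 'a::comm_ring_1" where
  "ps_one = (\<lambda>n. if n = (\<lambda>_. 0) then 1 else 0)"

definition int_pow :: "'a::comm_ring_1 \<Rightarrow> int \<Rightarrow> 'a" where
  "int_pow L m = (if 0 \<le> m then L ^ nat m else (SOME y. L * y = 1) ^ nat (- m))"

definition denom_factor :: "'a::comm_ring_1 \<Rightarrow> int \<Rightarrow> (nat \<Rightarrow> nat) \<Rightarrow> ((nat \<Rightarrow> nat) \<Rightarrow> 'a)" where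
  "denom_factor L m v = (\<lambda>n. ps_one n - (if n = v then int_pow L m else 0))"

definition denom_prod :: "nat \<Rightarrow> 'a::comm_ring_1 \<Rightarrow> (int \<times> (nat \<Rightarrow> nat)) list
    \<Rightarrow> ((nat \<Rightarrow> nat) \<Rightarrow> 'a)" where
  "denom_prod r L ps = foldr (\<lambda>(m, v) acc. ps_times r (denom_factor L m v) acc) ps ps_one"

text \<open>Integrable: lies in the subring A[T][(1 - L^m T^v)^{-1}]_{m<0, v in N^r - 0} of A[[T]],
  i.e. a = P / prod_j (1 - L^{m_j} T^{v_j}) with P a polynomial.\<close>
definition integrable :: "nat \<Rightarrow> 'a::comm_ring_1 \<Rightarrow> ((nat \<Rightarrow> nat) \<Rightarrow> 'a) \<Rightarrow> bool" where
  "integrable r L a \<longleftrightarrow>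
     (\<exists>P ps. is_series r P \<and> finite {n. P n \<noteq> 0} \<and>
        (\<forall>(m, v)\<in>set ps. m < 0 \<and> v \<in> expvecs r \<and> v \<noteq> (\<lambda>_. 0)) \<and>
        ps_times r a (denom_prod r L ps) = P)"

text \<open>Basic ordered cells. The list rs = [r_0, ..., r_s] with 0 = r_0 < ... < r_s = r.
  1-based coordinate n_i is stored at index i - 1.\<close>
definition valid_breaks :: "nat \<Rightarrow> nat list \<Rightarrow> bool" where
  "valid_breaks r rs \<longleftrightarrow> rs \<noteq> [] \<and> hd rs = 0 \<and> last rs = r \<and> sorted_wrt (<) rs"

definition basic_cell :: "nat \<Rightarrow> nat list \<Rightarrow> (nat \<Rightarrow> nat) set" where
  "basic_cell r rs = {n \<in> expvecs r.
     (\<forall>j. 1 \<le> j \<and> j < length rs \<longrightarrow>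
        (\<forall>i. rs ! (j - 1) < i \<and> i \<le> rs ! j \<longrightarrow> n (i - 1) = n (rs ! j - 1))) \<and>
     (\<forall>j. 2 \<le> j \<and> j < length rs \<longrightarrow> n (rs ! (j - 1) - 1) < n (rs ! j - 1))}"

definition ordered_cell :: "nat \<Rightarrow> (nat \<Rightarrow> nat) set \<Rightarrow> bool" where
  "ordered_cell r D \<longleftrightarrow> (\<exists>\<rho> rs. \<rho> permutes {..<r} \<and> valid_breaks r rs \<and>
      D = (\<lambda>n. n \<circ> \<rho>) ` basic_cell r rs)"

definition restrict_series :: "(nat \<Rightarrow> nat) set \<Rightarrow> ((nat \<Rightarrow> nat) \<Rightarrow> 'a::zero) \<Rightarrow> ((nat \<Rightarrow> nat) \<Rightarrow> 'a)" where
  "restrict_series D a = (\<lambda>n. if n \<in> D then a n else 0)"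

end

theory Submission
  imports Defs
begin


definition bnd :: "(nat \<Rightarrow> nat) \<Rightarrow> bool" where
  "bnd n \<longleftrightarrow> (\<exists>N. \<forall>i\<ge>N. n i = 0)"

definition dv :: "(nat \<Rightarrow> nat) \<Rightarrow> (nat \<Rightarrow> nat) set" where
  "dv n = {p. \<forall>i. p i \<le> n i}"

lemma bnd_zero[simp]: "bnd (\<lambda>_. 0)" by (auto simp: bnd_def)

lemma bnd_le: "bnd n \<Longrightarrow> \<forall>i. p i \<le> n i \<Longrightarrow> bnd p"
  unfolding bnd_def by (metis le_zero_eq)

lemma bnd_add[simp]: "bnd (\<lambda>i. p i + q i) \<longleftrightarrow> bnd p \<and> bnd q"
proof
  assume "bnd (\<lambda>i. p i + q i)" then show "bnd p \<and> bnd q" unfolding bnd_def by auto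
next
  assume "bnd p \<and> bnd q"
  then obtain N M where "\<forall>i\<ge>N. p i = 0" "\<forall>i\<ge>M. q i = 0" unfolding bnd_def by auto
  then have "\<forall>i\<ge>max N M. p i + q i = 0" by auto
  then show "bnd (\<lambda>i. p i + q i)" unfolding bnd_def by blast
qed

lemma bnd_sub: "bnd n \<Longrightarrow> bnd (\<lambda>i. n i - p i)"
  unfolding bnd_def apply clarsimp subgoal for N by (rule exI[of _ N]) simp done

lemma bnd_smult: "bnd v \<Longrightarrow> bnd (\<lambda>i. k * v i)"
  unfolding bnd_def apply clarsimp subgoal for N by (rule exI[of _ N]) simp done

lemma finite_dv: assumes "bnd n" shows "finite (dv n)"
proof -
  obtain N where N: "\<forall>i\<ge>N. n i = 0" using assms by (auto simp: bnd_def)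
  let ?B = "{..(\<Sum>i<N. n i)}"
  have "dv n \<subseteq> {f. \<forall>x. (x \<in> {..<N} \<longrightarrow> f x \<in> ?B) \<and> (x \<notin> {..<N} \<longrightarrow> f x = 0)}"
  proof (intro subsetI CollectI allI conjI impI)
    fix f x assume f: "f \<in> dv n"
    show "f x \<in> ?B" if "x \<in> {..<N}"
    proof -
      have "f x \<le> n x" using f by (auto simp: dv_def)
      also have "n x \<le> (\<Sum>i<N. n i)" using that by (intro member_le_sum) auto
      finally show ?thesis by simp
    qed
    show "f x = 0" if "x \<notin> {..<N}"
    proof -
      have "f x \<le> n x" using f by (auto simp: dv_def)
      moreover have "n x = 0" using N that by auto
      ultimately show ?thesis by simp
    qed
  qed
  then show ?thesis by (rule finite_subset) (intro finite_set_of_finite_funs, auto)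
qed

typedef (overloaded) 'a ser = "{f :: (nat \<Rightarrow> nat) \<Rightarrow> 'a::zero. \<forall>n. \<not> bnd n \<longrightarrow> f n = 0}"
  morphisms coeff Abs_ser
  by (rule exI[of _ "\<lambda>_. 0"]) auto

setup_lifting type_definition_ser

lemma coeff_nbnd: "\<not> bnd n \<Longrightarrow> coeff f n = 0"
  using coeff[of f] by auto

lemma ser_eqI: "(\<And>n. coeff f n = coeff g n) \<Longrightarrow> f = g"
  by (metis coeff_inverse ext)

instantiation ser :: (comm_ring_1) comm_ring_1
begin
lift_definition zero_ser :: "'a ser" is "\<lambda>n. 0" by auto
lift_definition one_ser :: "'a ser" is "\<lambda>n. if n = (\<lambda>_. 0) then 1 else 0" by auto
lift_definition plus_ser :: "'a ser \<Rightarrow> 'a ser \<Rightarrow> 'a ser" is "\<lambda>f g n. f n + g n" by auto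
lift_definition minus_ser :: "'a ser \<Rightarrow> 'a ser \<Rightarrow> 'a ser" is "\<lambda>f g n. f n - g n" by auto
lift_definition uminus_ser :: "'a ser \<Rightarrow> 'a ser" is "\<lambda>f n. - f n" by auto
lift_definition times_ser :: "'a ser \<Rightarrow> 'a ser \<Rightarrow> 'a ser" is
  "\<lambda>f g n. if bnd n then \<Sum>p\<in>dv n. f p * g (\<lambda>i. n i - p i) else 0" by auto

lemma coeff_times: "coeff (f * g) n = (if bnd n then \<Sum>p\<in>dv n. coeff f p * coeff g (\<lambda>i. n i - p i) else 0)"
  by transfer simp

lemma times_comm: "(f::'a ser) * g = g * f"
proof (rule ser_eqI)
  fix n
  show "coeff (f * g) n = coeff (g * f) n"
    unfolding coeff_times
    apply (simp only: mult.commute[of "coeff f _"])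
    apply (rule if_cong[OF refl _ refl])
    apply (rule sum.reindex_bij_witness[where i="\<lambda>p i. n i - p i" and j="\<lambda>p i. n i - p i"])
    apply (auto simp: dv_def)
    done
qed

lemma times_assoc: "(f::'a ser) * g * h = f * (g * h)"
proof (rule ser_eqI)
  fix n
  show "coeff (f * g * h) n = coeff (f * (g * h)) n"
  proof (cases "bnd n")
    case False then show ?thesis by (simp add: coeff_times)
  next
    case True
    have fin: "finite (dv n)" using True by (rule finite_dv)
    have "coeff (f * g * h) n = (\<Sum>p\<in>dv n. \<Sum>q\<in>dv p. coeff f q * coeff g (\<lambda>i. p i - q i) * coeff h (\<lambda>i. n i - p i))"
      using True by (auto simp: coeff_times sum_distrib_right dv_def intro!: sum.cong dest: bnd_le)
    also have "\<dots> = (\<Sum>(p,q)\<in>Sigma (dv n) dv. coeff f q * coeff g (\<lambda>i. p i - q i) * coeff h (\<lambda>i. n i - p i))"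
      using fin True by (subst sum.Sigma) (auto simp: dv_def intro!: finite_dv[unfolded dv_def] elim: bnd_le)
    also have "\<dots> = (\<Sum>(q,t)\<in>Sigma (dv n) (\<lambda>q. dv (\<lambda>i. n i - q i)). coeff f q * (coeff g t * coeff h (\<lambda>i. n i - q i - t i)))"
    proof (rule sum.reindex_bij_witness[where i="\<lambda>(q,t). (\<lambda>i. q i + t i, q)" and j="\<lambda>(p,q). (q, \<lambda>i. p i - q i)"])
      fix a assume "a \<in> Sigma (dv n) dv"
      then obtain p q where a: "a = (p,q)" "\<forall>i. p i \<le> n i" "\<forall>i. q i \<le> p i" by (cases a) (auto simp: dv_def)
      show "(\<lambda>(q,t). (\<lambda>i. q i + t i, q)) ((\<lambda>(p,q). (q, \<lambda>i. p i - q i)) a) = a"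
        using a by auto
      show "(\<lambda>(p,q). (q, \<lambda>i. p i - q i)) a \<in> Sigma (dv n) (\<lambda>q. dv (\<lambda>i. n i - q i))"
        using a by (auto simp: dv_def intro: le_trans diff_le_mono)
      have e: "(\<lambda>i. n i - q i - (p i - q i)) = (\<lambda>i. n i - p i)" using a by (auto intro!: ext)
      show "(case (case a of (p, q) \<Rightarrow> (q, \<lambda>i. p i - q i)) of (q, t) \<Rightarrow> coeff f q * (coeff g t * coeff h (\<lambda>i. n i - q i - t i))) =
         (case a of (p, q) \<Rightarrow> coeff f q * coeff g (\<lambda>i. p i - q i) * coeff h (\<lambda>i. n i - p i))"
        using a e by (simp add: mult.assoc)
    next
      fix b assume "b \<in> Sigma (dv n) (\<lambda>q. dv (\<lambda>i. n i - q i))"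
      then obtain q t where b: "b = (q,t)" "\<forall>i. q i \<le> n i" "\<forall>i. t i \<le> n i - q i" by (cases b) (auto simp: dv_def)
      show "(\<lambda>(p,q). (q, \<lambda>i. p i - q i)) ((\<lambda>(q,t). (\<lambda>i. q i + t i, q)) b) = b"
        using b by auto
      show "(\<lambda>(q,t). (\<lambda>i. q i + t i, q)) b \<in> Sigma (dv n) dv"
        using b by (auto simp: dv_def) (metis add.commute le_diff_conv2)
    qed
    also have "\<dots> = coeff (f * (g * h)) n"
      using fin True by (subst sum.Sigma[symmetric]) (auto intro!: finite_dv bnd_sub sum.cong simp: coeff_times sum_distrib_left bnd_sub)
    finally show ?thesis .
  qed
qed

instance
proof
  fix a b c :: "'a ser"
  show "a * b * c = a * (b * c)" by (rule times_assoc)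
  show "a * b = b * a" by (rule times_comm)
  show "1 * a = a"
  proof (rule ser_eqI)
    fix n show "coeff (1 * a) n = coeff a n"
    proof (cases "bnd n")
      case True
      have "coeff (1 * a) n = (\<Sum>p\<in>dv n. (if p = (\<lambda>_. 0) then coeff a n else 0))"
        using True by (auto simp: coeff_times one_ser.rep_eq intro!: sum.cong)
      also have "\<dots> = coeff a n" using True finite_dv[OF True] by (simp add: dv_def)
      finally show ?thesis .
    qed (simp add: coeff_times coeff_nbnd)
  qed
  show "(a + b) * c = a * c + b * c"
    by (rule ser_eqI) (simp add: coeff_times plus_ser.rep_eq sum.distrib distrib_right)
  show "a + b + c = a + (b + c)" by transfer (simp add: add.assoc)
  show "a + b = b + a" by transfer (simp add: add.commute)
  show "0 + a = a" by transfer simp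
  show "- a + a = 0" by transfer simp
  show "a - b = a + - b" by transfer simp
  show "(0::'a ser) \<noteq> 1" by transfer (metis zero_neq_one)
qed
end



abbreviation zv :: "nat \<Rightarrow> nat" where "zv \<equiv> (\<lambda>_. 0)"

lemma coeff_one: "coeff 1 n = (if n = zv then 1 else 0)" by transfer simp
lemma coeff_plus: "coeff (f + g) n = coeff f n + coeff g n" by transfer simp
lemma coeff_minus: "coeff (f - g) n = coeff f n - coeff g n" by transfer simp
lemma coeff_uminus: "coeff (- f) n = - coeff f n" by transfer simp
lemma coeff_zero: "coeff 0 n = 0" by transfer simp
lemma coeff_sum: "coeff (sum f S) n = (\<Sum>x\<in>S. coeff (f x) n)"
  by (induction S rule: infinite_finite_induct) (auto simp: coeff_plus coeff_zero)

lift_definition mon :: "'a::zero \<Rightarrow> (nat\<Rightarrow>nat) \<Rightarrow> 'a ser" is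
  "\<lambda>c v n. if bnd v \<and> n = v then c else 0" by auto

lemma coeff_mono: "coeff (mon c v) n = (if bnd v \<and> n = v then c else 0)"
  by transfer simp

lemma coeff_mono_times:
  "coeff (mon c v * F) n = (if bnd n \<and> (\<forall>i. v i \<le> n i) then c * coeff F (\<lambda>i. n i - v i) else 0)"
proof (cases "bnd n")
  case True
  have "coeff (mon c v * F) n = (\<Sum>p\<in>dv n. if p = v then c * coeff F (\<lambda>i. n i - p i) else 0)"
    using True by (auto simp: coeff_times coeff_mono dv_def intro!: sum.cong dest: bnd_le)
  also have "\<dots> = (if v \<in> dv n then c * coeff F (\<lambda>i. n i - v i) else 0)"
    using finite_dv[OF True] by (simp add: sum.delta')
  finally show ?thesis using True by (simp add: dv_def)
qed (simp add: coeff_times)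

lemma mono_mult: assumes "bnd u" "bnd w"
  shows "mon a u * mon b w = mon (a * b) (\<lambda>i. u i + w i)"
proof (rule ser_eqI)
  fix n
  have *: "((\<forall>i. u i \<le> n i) \<and> (\<lambda>i. n i - u i) = w) \<longleftrightarrow> n = (\<lambda>i. u i + w i)"
    by (auto simp: fun_eq_iff) (metis add_diff_inverse_nat not_less le_add1 diff_add_inverse)+
  show "coeff (mon a u * mon b w) n = coeff (mon (a * b) (\<lambda>i. u i + w i)) n"
    unfolding coeff_mono_times coeff_mono using assms * by auto
qed

lemma mono_zv: "mon 1 zv = 1" by (rule ser_eqI) (simp add: coeff_mono coeff_one)
lemma mono_add: "mon (a + b) v = mon a v + mon b v" by (rule ser_eqI) (simp add: coeff_mono coeff_plus)
lemma mono_0: "mon 0 v = 0" by (rule ser_eqI) (simp add: coeff_mono coeff_zero)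
lemma mono_uminus: "mon (- a) v = - mon a v" by (rule ser_eqI) (simp add: coeff_mono coeff_uminus)

lemma mono_pow: assumes "bnd v" shows "mon c v ^ k = mon (c ^ k) (\<lambda>i. k * v i)"
proof (induction k)
  case 0 then show ?case by (simp add: mono_zv)
next
  case (Suc k)
  then show ?case using assms by (simp add: mono_mult bnd_smult)
qed

lemma smult_inj: assumes "v \<noteq> zv" "(\<lambda>i. k * v i) = (\<lambda>i. k' * v i)" shows "k = k'"
proof -
  obtain i where "v i \<noteq> 0" using assms(1) by auto
  moreover have "k * v i = k' * v i" using assms(2) by (metis)
  ultimately show ?thesis by simp
qed

lift_definition geo :: "'a::comm_ring_1 \<Rightarrow> (nat\<Rightarrow>nat) \<Rightarrow> 'a ser" is
  "\<lambda>c v n. if bnd v \<and> v \<noteq> zv \<and> (\<exists>k. n = (\<lambda>i. k * v i)) then c ^ (THE k. n = (\<lambda>i. k * v i)) else 0"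
  by (auto dest: bnd_smult)

lemma coeff_geo_mult: assumes "bnd v" "v \<noteq> zv" shows "coeff (geo c v) (\<lambda>i. k * v i) = c ^ k"
proof -
  have "(THE k'. (\<lambda>i. k * v i) = (\<lambda>i. k' * v i)) = k"
    by (rule the_equality) (auto dest: smult_inj[OF assms(2)])
  then show ?thesis using assms by transfer auto
qed

lemma coeff_geo_not: "\<not> (\<exists>k. n = (\<lambda>i. k * v i)) \<Longrightarrow> coeff (geo c v) n = 0"
  by transfer auto

lemma geo_rec: assumes "bnd v" "v \<noteq> zv" shows "geo c v = 1 + mon c v * geo c v"
proof (rule ser_eqI)
  fix n
  show "coeff (geo c v) n = coeff (1 + mon c v * geo c v) n"
  proof (cases "\<exists>k. n = (\<lambda>i. k * v i)")
    case True
    then obtain k where k: "n = (\<lambda>i. k * v i)" by auto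
    show ?thesis
    proof (cases k)
      case 0
      have "\<not> (\<forall>i. v i \<le> 0)" using assms(2) by auto
      then show ?thesis using k 0 assms by (simp add: coeff_geo_mult[where k=0, simplified] coeff_plus coeff_one coeff_mono_times) blast
    next
      case (Suc k')
      have nz: "n \<noteq> zv" using k Suc assms(2) by (auto simp: fun_eq_iff)
      have e: "(\<lambda>i. n i - v i) = (\<lambda>i. k' * v i)" using k Suc by auto
      have "bnd n" using k assms bnd_smult by blast
      then show ?thesis using k Suc nz e assms
        by (simp add: coeff_geo_mult coeff_plus coeff_one coeff_mono_times del: mult_Suc)
    qed
  next
    case False
    have nz: "n \<noteq> zv" using False by (metis mult_0)
    have "\<not> (\<exists>k. (\<lambda>i. n i - v i) = (\<lambda>i. k * v i))" if "\<forall>i. v i \<le> n i"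
    proof
      assume "\<exists>k. (\<lambda>i. n i - v i) = (\<lambda>i. k * v i)"
      then obtain k where "(\<lambda>i. n i - v i) = (\<lambda>i. k * v i)" by auto
      then have "n = (\<lambda>i. Suc k * v i)" using that by (auto simp: fun_eq_iff) (metis add.commute le_add_diff_inverse)
      then show False using False by blast
    qed
    then show ?thesis using False nz
      by (auto simp: coeff_geo_not coeff_plus coeff_one coeff_mono_times)
  qed
qed

lemma geo_inv: assumes "bnd v" "v \<noteq> zv" shows "geo c v * (1 - mon c v) = 1"
proof -
  have "geo c v * (1 - mon c v) = geo c v - mon c v * geo c v" by (simp add: algebra_simps)
  also have "\<dots> = 1" using geo_rec[OF assms, of c] by (metis add_diff_cancel_right')
  finally show ?thesis .
qed



lemma geom_sum_ring: "(\<Sum>i<K. (x::'a::comm_ring_1) ^ i) * (1 - x) = 1 - x ^ K"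
proof (induction K)
  case (Suc K)
  have "(\<Sum>i<Suc K. x ^ i) * (1 - x) = (\<Sum>i<K. x ^ i) * (1 - x) + x ^ K * (1 - x)"
    by (simp add: distrib_right)
  also have "\<dots> = 1 - x ^ Suc K" using Suc by (simp add: algebra_simps)
  finally show ?case .
qed simp

lemma abs_split: fixes g gX S x X :: "'a::comm_ring_1"
  assumes "g * (1 - x) = 1" "gX * (1 - X) = 1" "S * (1 - x) = 1 - X"
  shows "g = S * gX"
proof -
  have "g = g * (gX * (1 - X))" using assms(2) by simp
  also have "\<dots> = g * gX * (S * (1 - x))" unfolding assms(3) by (simp add: algebra_simps)
  also have "\<dots> = S * gX * (g * (1 - x))" by (simp add: algebra_simps)
  finally show ?thesis using assms(1) by simp
qed

lemma abs_rest: fixes g S x X :: "'a::comm_ring_1"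
  assumes "g * (1 - x) = 1" "S * (1 - x) = 1 - X"
  shows "g = S + X * g"
proof -
  have "g = g * (S * (1 - x) + X)" using assms(2) by simp
  also have "\<dots> = S * (g * (1 - x)) + X * g" by (simp add: algebra_simps)
  finally show ?thesis using assms(1) by simp
qed

lemma abs_two: fixes gX gY gZ X Y :: "'a::comm_ring_1"
  assumes "gX * (1 - X) = 1" "gY * (1 - Y) = 1" "gZ * (1 - X * Y) = 1"
  shows "gX * gY = gZ * gX + Y * gZ * gY"
proof -
  have "gZ * gX + Y * gZ * gY = gZ * gX * (gY * (1 - Y)) + Y * gZ * gY * (gX * (1 - X))"
    using assms by simp
  also have "\<dots> = gX * gY * (gZ * (1 - X * Y))" by (simp add: algebra_simps)
  finally show ?thesis using assms(3) by simp
qed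

lemma geo_split: fixes c :: "'a::comm_ring_1"
  assumes "bnd v" "v \<noteq> zv" "q \<ge> 1"
  shows "geo c v = (\<Sum>i<q. mon (c ^ i) (\<lambda>j. i * v j)) * geo (c ^ q) (\<lambda>j. q * v j)"
proof (rule abs_split)
  show "geo c v * (1 - mon c v) = 1" by (rule geo_inv[OF assms(1,2)])
  have "(\<lambda>j. q * v j) \<noteq> zv" using assms(2,3) by (auto simp: fun_eq_iff)
  then show "geo (c ^ q) (\<lambda>j. q * v j) * (1 - mon (c ^ q) (\<lambda>j. q * v j)) = 1"
    using assms by (intro geo_inv bnd_smult)
  show "(\<Sum>i<q. mon (c ^ i) (\<lambda>j. i * v j)) * (1 - mon c v) = 1 - mon (c ^ q) (\<lambda>j. q * v j)"
    using geom_sum_ring[where K=q and x="mon c v"] assms(1) by (simp add: mono_pow)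
qed

lemma geo_rest: fixes c :: "'a::comm_ring_1"
  assumes "bnd v" "v \<noteq> zv"
  shows "geo c v = (\<Sum>i<K. mon (c ^ i) (\<lambda>j. i * v j)) + mon (c ^ K) (\<lambda>j. K * v j) * geo c v"
proof (rule abs_rest)
  show "geo c v * (1 - mon c v) = 1" by (rule geo_inv[OF assms(1,2)])
  show "(\<Sum>i<K. mon (c ^ i) (\<lambda>j. i * v j)) * (1 - mon c v) = 1 - mon (c ^ K) (\<lambda>j. K * v j)"
    using geom_sum_ring[where K=K and x="mon c v"] assms(1) by (simp add: mono_pow)
qed



lemma prod_nz: assumes "coeff (A * B) n \<noteq> 0"
  shows "\<exists>p. (\<forall>i. p i \<le> n i) \<and> bnd n \<and> coeff A p \<noteq> 0 \<and> coeff B (\<lambda>i. n i - p i) \<noteq> 0"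
proof -
  have b: "bnd n" using assms by (auto simp: coeff_times split: if_splits)
  then have "(\<Sum>p\<in>dv n. coeff A p * coeff B (\<lambda>i. n i - p i)) \<noteq> 0" using assms by (simp add: coeff_times)
  then obtain p where "p \<in> dv n" "coeff A p * coeff B (\<lambda>i. n i - p i) \<noteq> 0"
    by (meson sum.not_neutral_contains_not_neutral)
  then show ?thesis using b by (auto simp: dv_def)
qed

definition ell :: "nat \<Rightarrow> nat \<Rightarrow> (nat \<Rightarrow> nat) \<Rightarrow> int" where
  "ell x y n = int (n y) - int (n x)"

lemma ell_add[simp]: "ell x y (\<lambda>i. a i + b i) = ell x y a + ell x y b" by (simp add: ell_def)
lemma ell_smult[simp]: "ell x y (\<lambda>i. k * v i) = int k * ell x y v" by (simp add: ell_def algebra_simps)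
lemma ell_zv[simp]: "ell x y zv = 0" by (simp add: ell_def)
lemma ell_sub: "\<forall>i. p i \<le> n i \<Longrightarrow> ell x y n = ell x y p + ell x y (\<lambda>i. n i - p i)"
  by (simp add: ell_def of_nat_diff)

definition sge :: "nat \<Rightarrow> nat \<Rightarrow> int \<Rightarrow> 'a::zero ser \<Rightarrow> bool" where
  "sge x y t A \<longleftrightarrow> (\<forall>n. coeff A n \<noteq> 0 \<longrightarrow> t \<le> ell x y n)"
definition sle :: "nat \<Rightarrow> nat \<Rightarrow> int \<Rightarrow> 'a::zero ser \<Rightarrow> bool" where
  "sle x y t A \<longleftrightarrow> (\<forall>n. coeff A n \<noteq> 0 \<longrightarrow> ell x y n \<le> t)"

lemma sge_mult: assumes "sge x y s A" "sge x y t B" shows "sge x y (s + t) (A * B)"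
  unfolding sge_def
proof (intro allI impI)
  fix n assume "coeff (A * B) n \<noteq> 0"
  then obtain p where p: "\<forall>i. p i \<le> n i" "coeff A p \<noteq> 0" "coeff B (\<lambda>i. n i - p i) \<noteq> 0"
    using prod_nz by blast
  have "s \<le> ell x y p" "t \<le> ell x y (\<lambda>i. n i - p i)" using assms p unfolding sge_def by auto
  then show "s + t \<le> ell x y n" using ell_sub[OF p(1), of x y] by linarith
qed
lemma sle_mult: assumes "sle x y s A" "sle x y t B" shows "sle x y (s + t) (A * B)"
  unfolding sle_def
proof (intro allI impI)
  fix n assume "coeff (A * B) n \<noteq> 0"
  then obtain p where p: "\<forall>i. p i \<le> n i" "coeff A p \<noteq> 0" "coeff B (\<lambda>i. n i - p i) \<noteq> 0"
    using prod_nz by blast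
  have "ell x y p \<le> s" "ell x y (\<lambda>i. n i - p i) \<le> t" using assms p unfolding sle_def by auto
  then show "ell x y n \<le> s + t" using ell_sub[OF p(1), of x y] by linarith
qed
lemma sge_weaken: "sge x y t A \<Longrightarrow> s \<le> t \<Longrightarrow> sge x y s A"
  unfolding sge_def by force
lemma sle_weaken: "sle x y t A \<Longrightarrow> t \<le> s \<Longrightarrow> sle x y s A"
  unfolding sle_def by force
lemma sge_mono: "sge x y (ell x y u) (mon c u)" by (simp add: sge_def coeff_mono)
lemma sle_mono: "sle x y (ell x y u) (mon c u)" by (simp add: sle_def coeff_mono)
lemma sge_one: "sge x y 0 1" by (simp add: sge_def coeff_one)
lemma sle_one: "sle x y 0 1" by (simp add: sle_def coeff_one)
lemma sge_geo: assumes "0 \<le> ell x y v" shows "sge x y 0 (geo c v)"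
  unfolding sge_def
proof (intro allI impI)
  fix n assume "coeff (geo c v) n \<noteq> 0"
  then obtain k where "n = (\<lambda>i. k * v i)" using coeff_geo_not by blast
  then show "0 \<le> ell x y n" using assms by simp
qed
lemma sle_geo: assumes "ell x y v \<le> 0" shows "sle x y 0 (geo c v)"
  unfolding sle_def
proof (intro allI impI)
  fix n assume "coeff (geo c v) n \<noteq> 0"
  then obtain k where "n = (\<lambda>i. k * v i)" using coeff_geo_not by blast
  then show "ell x y n \<le> 0" using assms by (simp add: mult_nonneg_nonpos)
qed

lift_definition restr :: "(nat \<Rightarrow> nat) set \<Rightarrow> 'a::zero ser \<Rightarrow> 'a ser" is
  "\<lambda>D f n. if n \<in> D then f n else 0" by auto

lemma coeff_restr: "coeff (restr D f) n = (if n \<in> D then coeff f n else 0)" by transfer simp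
lemma restr_add: "restr D (f + g) = restr D f + restr D g"
  by (rule ser_eqI) (simp add: coeff_restr coeff_plus)
lemma restr_minus: "restr D (f - g) = restr D f - restr D g"
  by (rule ser_eqI) (simp add: coeff_restr coeff_minus)
lemma restr_zero: "restr D 0 = 0"
  by (rule ser_eqI) (simp add: coeff_restr coeff_zero)
lemma restr_sum: "restr D (sum f S) = (\<Sum>x\<in>S. restr D (f x))"
  by (induction S rule: infinite_finite_induct) (auto simp: restr_add restr_zero)
lemma restr_restr: "restr D (restr E f) = restr (D \<inter> E) f"
  by (rule ser_eqI) (simp add: coeff_restr)
lemma restr_compl: "restr (- D) f = f - restr D f"
  by (rule ser_eqI) (simp add: coeff_restr coeff_minus)
lemma restr_UNIV: "restr UNIV f = f"
  by (rule ser_eqI) (simp add: coeff_restr)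

definition H :: "nat \<Rightarrow> nat \<Rightarrow> (nat \<Rightarrow> nat) set" where "H x y = {n. 0 \<le> ell x y n}"

lemma restr_H_id: "sge x y 0 A \<Longrightarrow> restr (H x y) A = A"
  by (rule ser_eqI) (auto simp: coeff_restr H_def sge_def)
lemma restr_H_0: "sle x y t A \<Longrightarrow> t < 0 \<Longrightarrow> restr (H x y) A = 0"
  by (rule ser_eqI) (fastforce simp: coeff_restr H_def sle_def coeff_zero)

definition rs :: "nat \<Rightarrow> 'a::zero ser \<Rightarrow> bool" where
  "rs r A \<longleftrightarrow> (\<forall>n. n \<notin> expvecs r \<longrightarrow> coeff A n = 0)"
definition fin :: "'a::zero ser \<Rightarrow> bool" where
  "fin A \<longleftrightarrow> finite {n. coeff A n \<noteq> 0}"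

lemma expvecs_bnd: "n \<in> expvecs r \<Longrightarrow> bnd n" by (auto simp: expvecs_def bnd_def)
lemma expvecs_add[simp]: "(\<lambda>i. a i + b i) \<in> expvecs r \<longleftrightarrow> a \<in> expvecs r \<and> b \<in> expvecs r"
  by (auto simp: expvecs_def)
lemma expvecs_smult: "v \<in> expvecs r \<Longrightarrow> (\<lambda>i. k * v i) \<in> expvecs r"
  by (auto simp: expvecs_def)
lemma expvecs_zv[simp]: "zv \<in> expvecs r" by (auto simp: expvecs_def)

lemma rs_mult: "rs r A \<Longrightarrow> rs r B \<Longrightarrow> rs r (A * B)"
  unfolding rs_def
proof (intro allI impI, rule ccontr)
  fix n assume A: "\<forall>n. n \<notin> expvecs r \<longrightarrow> coeff A n = 0" and B: "\<forall>n. n \<notin> expvecs r \<longrightarrow> coeff B n = 0"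
    and n: "n \<notin> expvecs r" and nz: "coeff (A * B) n \<noteq> 0"
  obtain p where p: "\<forall>i. p i \<le> n i" "coeff A p \<noteq> 0" "coeff B (\<lambda>i. n i - p i) \<noteq> 0"
    using prod_nz[OF nz] by blast
  have e1: "p \<in> expvecs r" using A p(2) by blast
  have e2: "(\<lambda>i. n i - p i) \<in> expvecs r" using B p(3) by blast
  have "n i = 0" if "i \<ge> r" for i
  proof -
    have "p i = 0" using e1 that by (simp add: expvecs_def)
    moreover have "n i - p i = 0" using e2 that by (simp add: expvecs_def)
    ultimately show ?thesis by simp
  qed
  then have "n \<in> expvecs r" by (simp add: expvecs_def)
  then show False using n by simp
qed
lemma rs_add: "rs r A \<Longrightarrow> rs r B \<Longrightarrow> rs r (A + B)" by (simp add: rs_def coeff_plus)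
lemma rs_minus: "rs r A \<Longrightarrow> rs r B \<Longrightarrow> rs r (A - B)" by (simp add: rs_def coeff_minus)
lemma rs_uminus: "rs r A \<Longrightarrow> rs r (- A)" by (simp add: rs_def coeff_uminus)
lemma rs_zero: "rs r 0" by (simp add: rs_def coeff_zero)
lemma rs_one: "rs r 1" by (auto simp: rs_def coeff_one)
lemma rs_mono: "u \<in> expvecs r \<Longrightarrow> rs r (mon c u)" by (auto simp: rs_def coeff_mono)
lemma rs_geo: assumes "v \<in> expvecs r" shows "rs r (geo c v)"
  unfolding rs_def
proof (intro allI impI)
  fix n assume n: "n \<notin> expvecs r"
  show "coeff (geo c v) n = 0"
  proof (rule coeff_geo_not, rule notI)
    assume "\<exists>k. n = (\<lambda>i. k * v i)"
    then show False using n expvecs_smult[OF assms] by auto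
  qed
qed
lemma rs_restr: "rs r A \<Longrightarrow> rs r (restr D A)" by (simp add: rs_def coeff_restr)
lemma rs_sum: "(\<And>x. x \<in> S \<Longrightarrow> rs r (f x)) \<Longrightarrow> rs r (sum f S)"
  by (induction S rule: infinite_finite_induct) (auto simp: rs_zero rs_add)
lemma rs_prod_list: "(\<And>A. A \<in> set As \<Longrightarrow> rs r A) \<Longrightarrow> rs r (prod_list As)"
  by (induction As) (auto simp: rs_one rs_mult)

lemma fin_mult: assumes "fin A" "fin B" shows "fin (A * B)"
proof -
  let ?SA = "{n. coeff A n \<noteq> 0}" and ?SB = "{n. coeff B n \<noteq> 0}"
  have "{n. coeff (A * B) n \<noteq> 0} \<subseteq> (\<lambda>(p,q). \<lambda>i. p i + q i) ` (?SA \<times> ?SB)"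
  proof
    fix n assume "n \<in> {n. coeff (A * B) n \<noteq> 0}"
    then obtain p where p: "\<forall>i. p i \<le> n i" "coeff A p \<noteq> 0" "coeff B (\<lambda>i. n i - p i) \<noteq> 0"
      using prod_nz by blast
    have "n = (\<lambda>(p,q). \<lambda>i. p i + q i) (p, \<lambda>i. n i - p i)" using p(1) by (auto simp: fun_eq_iff)
    then show "n \<in> (\<lambda>(p,q). \<lambda>i. p i + q i) ` (?SA \<times> ?SB)" using p by blast
  qed
  moreover have "finite ((\<lambda>(p,q). \<lambda>i. p i + q i) ` (?SA \<times> ?SB))"
    using assms unfolding fin_def by simp
  ultimately show ?thesis unfolding fin_def by (rule finite_subset)
qed
lemma fin_add: "fin A \<Longrightarrow> fin B \<Longrightarrow> fin (A + B)"
  unfolding fin_def by (rule finite_subset[of _ "{n. coeff A n \<noteq> 0} \<union> {n. coeff B n \<noteq> 0}"]) (auto simp: coeff_plus)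
lemma fin_uminus: "fin A \<Longrightarrow> fin (- A)" by (simp add: fin_def coeff_uminus)
lemma fin_minus: "fin A \<Longrightarrow> fin B \<Longrightarrow> fin (A - B)"
  by (metis fin_add fin_uminus diff_conv_add_uminus)
lemma fin_zero: "fin 0" by (simp add: fin_def coeff_zero)
lemma fin_one: "fin 1" by (simp add: fin_def coeff_one)
lemma fin_mono: "fin (mon c u)"
  unfolding fin_def by (rule finite_subset[of _ "{u}"]) (auto simp: coeff_mono split: if_splits)
lemma fin_prod_list: "(\<And>A. A \<in> set As \<Longrightarrow> fin A) \<Longrightarrow> fin (prod_list As)"
  by (induction As) (auto simp: fin_one fin_mult)

lemma ser_expand: assumes "fin P" shows "P = (\<Sum>u\<in>{n. coeff P n \<noteq> 0}. mon (coeff P u) u)"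
proof (rule ser_eqI)
  fix n
  have "coeff (\<Sum>u\<in>{n. coeff P n \<noteq> 0}. mon (coeff P u) u) n = (\<Sum>u\<in>{n. coeff P n \<noteq> 0}. if u = n then coeff P n else 0)"
    unfolding coeff_sum by (rule sum.cong) (auto simp: coeff_mono coeff_nbnd)
  also have "\<dots> = coeff P n" using assms by (simp add: fin_def)
  finally show "coeff P n = coeff (\<Sum>u\<in>{n. coeff P n \<noteq> 0}. mon (coeff P u) u) n" by simp
qed



definition DP :: "'a::comm_ring_1 \<Rightarrow> (int \<times> (nat \<Rightarrow> nat)) list \<Rightarrow> 'a ser" where
  "DP L ps = prod_list (map (\<lambda>(m, v). 1 - mon (int_pow L m) v) ps)"
definition GP :: "'a::comm_ring_1 \<Rightarrow> (int \<times> (nat \<Rightarrow> nat)) list \<Rightarrow> 'a ser" where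
  "GP L ps = prod_list (map (\<lambda>(m, v). geo (int_pow L m) v) ps)"
definition okp :: "nat \<Rightarrow> (int \<times> (nat \<Rightarrow> nat)) list \<Rightarrow> bool" where
  "okp r ps \<longleftrightarrow> (\<forall>(m, v)\<in>set ps. m < 0 \<and> v \<in> expvecs r \<and> v \<noteq> zv)"
definition Ig :: "nat \<Rightarrow> 'a::comm_ring_1 \<Rightarrow> 'a ser \<Rightarrow> bool" where
  "Ig r L A \<longleftrightarrow> (\<exists>P ps. rs r P \<and> fin P \<and> okp r ps \<and> A * DP L ps = P)"

lemma DP_simps[simp]: "DP L [] = 1" "DP L ((m,v) # ps) = (1 - mon (int_pow L m) v) * DP L ps"
  "DP L (ps @ qs) = DP L ps * DP L qs"
  by (simp_all add: DP_def)
lemma GP_simps[simp]: "GP L [] = 1" "GP L ((m,v) # ps) = geo (int_pow L m) v * GP L ps"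
  "GP L (ps @ qs) = GP L ps * GP L qs"
  by (simp_all add: GP_def)
lemma okp_simps[simp]: "okp r []" "okp r ((m,v) # ps) \<longleftrightarrow> m < 0 \<and> v \<in> expvecs r \<and> v \<noteq> zv \<and> okp r ps"
  "okp r (ps @ qs) \<longleftrightarrow> okp r ps \<and> okp r qs"
  by (auto simp: okp_def)

lemma DP_GP: "okp r ps \<Longrightarrow> DP L ps * GP L ps = 1"
proof (induction ps)
  case (Cons g ps)
  obtain m v where g: "g = (m,v)" by (cases g)
  have "geo (int_pow L m) v * (1 - mon (int_pow L m) v) = 1"
    using Cons.prems g by (intro geo_inv) (auto intro: expvecs_bnd)
  moreover have "DP L (g # ps) * GP L (g # ps) = (geo (int_pow L m) v * (1 - mon (int_pow L m) v)) * (DP L ps * GP L ps)"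
    by (simp add: g algebra_simps)
  ultimately show ?case using Cons g by simp
qed simp

lemma rs_DP: "okp r ps \<Longrightarrow> rs r (DP L ps)"
  by (induction ps) (auto simp: rs_one rs_mult rs_minus rs_mono)
lemma fin_DP: "fin (DP L ps)"
  by (induction ps) (auto simp: fin_one fin_mult fin_minus fin_mono)
lemma rs_GP: "okp r ps \<Longrightarrow> rs r (GP L ps)"
  by (induction ps) (auto simp: rs_one rs_mult rs_geo)

lemma Ig_poly: "rs r P \<Longrightarrow> fin P \<Longrightarrow> Ig r L P"
  unfolding Ig_def by (rule exI[of _ P], rule exI[of _ "[]"]) simp
lemma Ig_zero: "Ig r L 0" by (rule Ig_poly) (simp_all add: rs_zero fin_zero)
lemma Ig_mono: "u \<in> expvecs r \<Longrightarrow> Ig r L (mon c u)" by (rule Ig_poly) (simp_all add: rs_mono fin_mono)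

lemma Ig_mult: assumes "Ig r L A" "Ig r L B" shows "Ig r L (A * B)"
proof -
  obtain P ps where A: "rs r P" "fin P" "okp r ps" "A * DP L ps = P" using assms(1) by (auto simp: Ig_def)
  obtain Q qs where B: "rs r Q" "fin Q" "okp r qs" "B * DP L qs = Q" using assms(2) by (auto simp: Ig_def)
  have "A * B * DP L (ps @ qs) = P * Q" using A(4) B(4) by (auto simp: algebra_simps)
  then show ?thesis unfolding Ig_def using A B by (intro exI[of _ "P * Q"] exI[of _ "ps @ qs"]) (simp add: rs_mult fin_mult)
qed

lemma Ig_add: assumes "Ig r L A" "Ig r L B" shows "Ig r L (A + B)"
proof -
  obtain P ps where A: "rs r P" "fin P" "okp r ps" "A * DP L ps = P" using assms(1) by (auto simp: Ig_def)
  obtain Q qs where B: "rs r Q" "fin Q" "okp r qs" "B * DP L qs = Q" using assms(2) by (auto simp: Ig_def)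
  have "(A + B) * DP L (ps @ qs) = P * DP L qs + Q * DP L ps" using A(4) B(4) by (auto simp: algebra_simps)
  then show ?thesis unfolding Ig_def using A B
    by (intro exI[of _ "P * DP L qs + Q * DP L ps"] exI[of _ "ps @ qs"])
       (simp add: rs_mult fin_mult rs_add fin_add rs_DP fin_DP)
qed

lemma Ig_uminus: assumes "Ig r L A" shows "Ig r L (- A)"
proof -
  obtain P ps where A: "rs r P" "fin P" "okp r ps" "A * DP L ps = P" using assms(1) by (auto simp: Ig_def)
  have "(- A) * DP L ps = - P" using A(4) by simp
  then show ?thesis unfolding Ig_def using A by (intro exI[of _ "- P"] exI[of _ ps]) (simp add: rs_uminus fin_uminus)
qed

lemma Ig_minus: "Ig r L A \<Longrightarrow> Ig r L B \<Longrightarrow> Ig r L (A - B)"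
  by (metis Ig_add Ig_uminus diff_conv_add_uminus)

lemma Ig_sum: "(\<And>x. x \<in> S \<Longrightarrow> Ig r L (f x)) \<Longrightarrow> Ig r L (sum f S)"
  by (induction S rule: infinite_finite_induct) (auto simp: Ig_zero Ig_add)

lemma Ig_geo: assumes "m < 0" "v \<in> expvecs r" "v \<noteq> zv" shows "Ig r L (geo (int_pow L m) v)"
proof -
  have "geo (int_pow L m) v * DP L [(m,v)] = 1"
    using assms by (simp add: geo_inv expvecs_bnd)
  then show ?thesis unfolding Ig_def using assms
    by (intro exI[of _ 1] exI[of _ "[(m,v)]"]) (simp add: rs_one fin_one)
qed

lemma Ig_GP: "okp r ps \<Longrightarrow> Ig r L (GP L ps)"
proof (induction ps)
  case Nil then show ?case using Ig_poly[of r 1 L] by (simp add: rs_one fin_one)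
next
  case (Cons g ps) then show ?case by (cases g) (auto intro!: Ig_mult Ig_geo)
qed

lemma int_pow_neg: "m < 0 \<Longrightarrow> int_pow L m = (SOME y. L * y = 1) ^ nat (- m)"
  by (simp add: int_pow_def)
lemma int_pow_mult: "m1 < 0 \<Longrightarrow> m2 < 0 \<Longrightarrow> int_pow L m1 * int_pow L m2 = int_pow L (m1 + m2)"
proof -
  assume a: "m1 < 0" "m2 < 0"
  have e: "nat (- (m1 + m2)) = nat (- m1) + nat (- m2)" using a by (subst nat_add_distrib[symmetric]) auto
  show ?thesis using a e by (simp add: int_pow_neg power_add[symmetric])
qed
lemma int_pow_pow: "m < 0 \<Longrightarrow> q \<ge> 1 \<Longrightarrow> int_pow L m ^ q = int_pow L (int q * m)"
proof -
  assume "m < 0" "q \<ge> 1"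
  moreover have "nat (- (int q * m)) = nat (- m) * q"
  proof -
    have "nat (- (int q * m)) = nat ((- m) * int q)" by (simp add: mult.commute)
    also have "\<dots> = nat (- m) * q" using \<open>m < 0\<close> by (subst nat_mult_distrib) auto
    finally show ?thesis .
  qed
  moreover have "int q * m < 0" using \<open>m < 0\<close> \<open>q \<ge> 1\<close> by (simp add: mult_pos_neg)
  ultimately show ?thesis by (simp add: int_pow_neg power_mult)
qed



definition nzc :: "nat \<Rightarrow> nat \<Rightarrow> (int \<times> (nat \<Rightarrow> nat)) list \<Rightarrow> nat" where
  "nzc x y ps = length (filter (\<lambda>(m, v). ell x y v \<noteq> 0) ps)"

lemma nzc_simps[simp]: "nzc x y [] = 0"
  "nzc x y ((m,v) # ps) = (if ell x y v \<noteq> 0 then Suc (nzc x y ps) else nzc x y ps)"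
  "nzc x y (ps @ qs) = nzc x y ps + nzc x y qs"
  by (simp_all add: nzc_def)

lemma GP_remove: "GP L (xs @ (m,v) # ys) = geo (int_pow L m) v * GP L (xs @ ys)"
  by (simp add: algebra_simps)
lemma nzc_remove: "nzc x y (xs @ (m,v) # ys) = (if ell x y v \<noteq> 0 then Suc (nzc x y (xs @ ys)) else nzc x y (xs @ ys))"
  by simp
lemma okp_remove: "okp r (xs @ (m,v) # ys) \<longleftrightarrow> m < 0 \<and> v \<in> expvecs r \<and> v \<noteq> zv \<and> okp r (xs @ ys)"
  by auto

lemma sge_GP: "(\<forall>(m,v)\<in>set ps. 0 \<le> ell x y v) \<Longrightarrow> sge x y 0 (GP L ps)"
proof (induction ps)
  case Nil then show ?case by (simp add: sge_one)
next
  case (Cons g ps) then show ?case by (cases g) (auto dest: sge_mult[OF sge_geo, where t=0, simplified])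
qed
lemma sle_GP: "(\<forall>(m,v)\<in>set ps. ell x y v \<le> 0) \<Longrightarrow> sle x y 0 (GP L ps)"
proof (induction ps)
  case Nil then show ?case by (simp add: sle_one)
next
  case (Cons g ps) then show ?case by (cases g) (auto dest: sle_mult[OF sle_geo, where t=0, simplified])
qed

lemma mixed_identity: fixes M S1 S2 gX gY gZ Y R :: "'a::comm_ring_1"
  assumes "gX * gY = gZ * gX + Y * gZ * gY"
  shows "M * (S1 * gX) * (S2 * gY) * R = M * S1 * S2 * (gZ * (gX * R)) + M * S1 * S2 * Y * (gZ * (gY * R))"
proof -
  have "M * (S1 * gX) * (S2 * gY) * R = M * S1 * S2 * (gX * gY) * R" by (simp add: algebra_simps)
  also have "\<dots> = M * S1 * S2 * (gZ * (gX * R)) + M * S1 * S2 * Y * (gZ * (gY * R))"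
    unfolding assms by (simp add: algebra_simps)
  finally show ?thesis .
qed

lemma sum2: fixes M W :: "'a::comm_ring_1"
  shows "M * sum a I * sum b J * W = (\<Sum>i\<in>I. \<Sum>j\<in>J. M * a i * b j * W)"
  by (simp add: sum_distrib_left sum_distrib_right mult.assoc sum.swap[of _ J])



lemma core:
  assumes "okp r ps" "u \<in> expvecs r"
  shows "Ig r L (restr (H x y) (mon c u * GP L ps))"
  using assms
proof (induction "nzc x y ps" arbitrary: ps c u rule: less_induct)
  case less
  note IH = less.hyps
  have ub: "bnd u" using less.prems(2) by (rule expvecs_bnd)
  show ?case
  proof (cases "\<exists>g\<in>set ps. 0 < ell x y (snd g)")
    case posex: True
    show ?thesis
    proof (cases "\<exists>g\<in>set ps. ell x y (snd g) < 0")
      case negex: True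
      obtain m1 v1 where g1: "(m1,v1) \<in> set ps" "0 < ell x y v1" using posex by auto
      obtain m2 v2 where g2: "(m2,v2) \<in> set ps" "ell x y v2 < 0" using negex by auto
      obtain xs ys where ps: "ps = xs @ (m1,v1) # ys" using split_list[OF g1(1)] by blast
      have "(m2,v2) \<noteq> (m1,v1)" using g1 g2 by auto
      then have "(m2,v2) \<in> set (xs @ ys)" using g2(1) unfolding ps by auto
      then obtain xs' ys' where ps': "xs @ ys = xs' @ (m2,v2) # ys'" using split_list by metis
      define rest where "rest = xs' @ ys'"
      have ok1: "m1 < 0" "v1 \<in> expvecs r" "v1 \<noteq> zv" "okp r (xs @ ys)"
        using less.prems(1) unfolding ps by auto
      have ok2: "m2 < 0" "v2 \<in> expvecs r" "v2 \<noteq> zv" "okp r rest"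
        using ok1(4) unfolding ps' rest_def by auto
      have v1b: "bnd v1" and v2b: "bnd v2" using ok1(2) ok2(2) by (auto intro: expvecs_bnd)
      define c1 where "c1 = int_pow L m1"
      define c2 where "c2 = int_pow L m2"
      have GPps: "GP L ps = geo c1 v1 * (geo c2 v2 * GP L rest)"
        unfolding ps GP_remove ps' rest_def c1_def c2_def by simp
      have nzps: "nzc x y ps = Suc (Suc (nzc x y rest))"
        using g1(2) g2(2) unfolding ps nzc_remove ps' rest_def by simp
      define p where "p = nat (ell x y v1)"
      define q where "q = nat (- ell x y v2)"
      have pe: "int p = ell x y v1" "int q = - ell x y v2" using g1(2) g2(2) by (auto simp: p_def q_def)
      have p1: "p \<ge> 1" and q1: "q \<ge> 1" using g1(2) g2(2) by (auto simp: p_def q_def)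
      define mX where "mX = int q * m1"
      define mY where "mY = int p * m2"
      define mZ where "mZ = mX + mY"
      define vX where "vX = (\<lambda>j. q * v1 j)"
      define vY where "vY = (\<lambda>j. p * v2 j)"
      define vZ where "vZ = (\<lambda>j. vX j + vY j)"
      have mX: "mX < 0" and mY: "mY < 0"
        using ok1(1) ok2(1) p1 q1 by (auto simp: mX_def mY_def mult_pos_neg)
      then have mZ: "mZ < 0" by (simp add: mZ_def)
      have vXe: "vX \<in> expvecs r" and vYe: "vY \<in> expvecs r" and vZe: "vZ \<in> expvecs r"
        using ok1(2) ok2(2) by (auto simp: vX_def vY_def vZ_def expvecs_smult)
      have vXb: "bnd vX" and vYb: "bnd vY" and vZb: "bnd vZ" using vXe vYe vZe by (auto intro: expvecs_bnd)
      have vXnz: "vX \<noteq> zv" using ok1(3) q1 by (auto simp: vX_def fun_eq_iff)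
      have vYnz: "vY \<noteq> zv" using ok2(3) p1 by (auto simp: vY_def fun_eq_iff)
      have vZnz: "vZ \<noteq> zv" using vXnz by (auto simp: vZ_def fun_eq_iff)
      have ellX: "ell x y vX \<noteq> 0" using g1(2) q1 by (simp add: vX_def)
      have ellY: "ell x y vY \<noteq> 0" using g2(2) p1 by (simp add: vY_def)
      have ellZ: "ell x y vZ = 0" unfolding vZ_def vX_def vY_def
        using pe by (simp add: algebra_simps)
      define gX where "gX = geo (int_pow L mX) vX"
      define gY where "gY = geo (int_pow L mY) vY"
      define gZ where "gZ = geo (int_pow L mZ) vZ"
      define S1 where "S1 = (\<Sum>i<q. mon (c1 ^ i) (\<lambda>j. i * v1 j))"
      define S2 where "S2 = (\<Sum>j<p. mon (c2 ^ j) (\<lambda>k. j * v2 k))"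
      have sp1: "geo c1 v1 = S1 * gX"
        unfolding S1_def gX_def mX_def vX_def c1_def int_pow_pow[OF ok1(1) q1, symmetric]
        by (rule geo_split[OF v1b ok1(3) q1])
      have sp2: "geo c2 v2 = S2 * gY"
        unfolding S2_def gY_def mY_def vY_def c2_def int_pow_pow[OF ok2(1) p1, symmetric]
        by (rule geo_split[OF v2b ok2(3) p1])
      have XY: "mon (int_pow L mX) vX * mon (int_pow L mY) vY = mon (int_pow L mZ) vZ"
        using vXb vYb mX mY by (simp add: mono_mult int_pow_mult mZ_def vZ_def)
      have two: "gX * gY = gZ * gX + mon (int_pow L mY) vY * gZ * gY"
      proof (rule abs_two)
        show "gX * (1 - mon (int_pow L mX) vX) = 1" unfolding gX_def by (rule geo_inv[OF vXb vXnz])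
        show "gY * (1 - mon (int_pow L mY) vY) = 1" unfolding gY_def by (rule geo_inv[OF vYb vYnz])
        show "gZ * (1 - mon (int_pow L mX) vX * mon (int_pow L mY) vY) = 1"
          unfolding XY gZ_def by (rule geo_inv[OF vZb vZnz])
      qed
      define psA where "psA = (mZ, vZ) # (mX, vX) # rest"
      define psB where "psB = (mZ, vZ) # (mY, vY) # rest"
      have GPA: "GP L psA = gZ * (gX * GP L rest)" by (simp add: psA_def gZ_def gX_def)
      have GPB: "GP L psB = gZ * (gY * GP L rest)" by (simp add: psB_def gZ_def gY_def)
      have okA: "okp r psA" using mZ mX vZe vXe vZnz vXnz ok2(4) by (simp add: psA_def)
      have okB: "okp r psB" using mZ mY vZe vYe vZnz vYnz ok2(4) by (simp add: psB_def)
      have nzA: "nzc x y psA < nzc x y ps" using nzps ellZ ellX by (simp add: psA_def)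
      have nzB: "nzc x y psB < nzc x y ps" using nzps ellZ ellY by (simp add: psB_def)
      have "mon c u * GP L ps = mon c u * (S1 * gX) * (S2 * gY) * GP L rest"
        unfolding GPps sp1 sp2 by (simp add: mult.assoc)
      also have "\<dots> = mon c u * S1 * S2 * (gZ * (gX * GP L rest)) + mon c u * S1 * S2 * mon (int_pow L mY) vY * (gZ * (gY * GP L rest))"
        by (rule mixed_identity[OF two])
      also have "\<dots> = mon c u * S1 * S2 * GP L psA + mon c u * S1 * S2 * (mon (int_pow L mY) vY * GP L psB)"
        unfolding GPA GPB by (simp add: mult.assoc)
      also have "\<dots> = (\<Sum>i<q. \<Sum>j<p. mon c u * mon (c1 ^ i) (\<lambda>k. i * v1 k) * mon (c2 ^ j) (\<lambda>k. j * v2 k) * GP L psA)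
          + (\<Sum>i<q. \<Sum>j<p. mon c u * mon (c1 ^ i) (\<lambda>k. i * v1 k) * mon (c2 ^ j) (\<lambda>k. j * v2 k) * (mon (int_pow L mY) vY * GP L psB))"
        unfolding S1_def S2_def sum2 by simp
      finally have eq: "mon c u * GP L ps = \<dots>" .
      have IA: "Ig r L (restr (H x y) (mon c' u' * GP L psA))" if "u' \<in> expvecs r" for c' u'
        using IH[OF nzA okA that] .
      have IB: "Ig r L (restr (H x y) (mon c' u' * GP L psB))" if "u' \<in> expvecs r" for c' u'
        using IH[OF nzB okB that] .
      have TA: "Ig r L (restr (H x y) (mon c u * mon (c1 ^ i) (\<lambda>k. i * v1 k) * mon (c2 ^ j) (\<lambda>k. j * v2 k) * GP L psA))" for i j
        using IA[of "\<lambda>k. u k + i * v1 k + j * v2 k" "c * c1 ^ i * c2 ^ j"] ub v1b v2b less.prems(2) ok1(2) ok2(2)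
        by (simp add: mono_mult bnd_smult expvecs_smult)
      have TB: "Ig r L (restr (H x y) (mon c u * mon (c1 ^ i) (\<lambda>k. i * v1 k) * mon (c2 ^ j) (\<lambda>k. j * v2 k) * (mon (int_pow L mY) vY * GP L psB)))" for i j
        using IB[of "\<lambda>k. u k + i * v1 k + j * v2 k + vY k" "c * c1 ^ i * c2 ^ j * int_pow L mY"] ub v1b v2b vYb
          less.prems(2) ok1(2) ok2(2) vYe
        by (simp add: mono_mult bnd_smult expvecs_smult mult.assoc[symmetric])
      show ?thesis unfolding eq restr_add restr_sum
        using TA TB by (intro Ig_add Ig_sum)
    next
      case False
      then have allp: "\<forall>(m,v)\<in>set ps. 0 \<le> ell x y v" by auto
      obtain m v where g: "(m,v) \<in> set ps" "0 < ell x y v" using posex by auto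
      obtain xs ys where ps: "ps = xs @ (m,v) # ys" using split_list[OF g(1)] by blast
      define rest where "rest = xs @ ys"
      have ok: "m < 0" "v \<in> expvecs r" "v \<noteq> zv" "okp r rest"
        using less.prems(1) unfolding ps rest_def by auto
      have vb: "bnd v" using ok(2) by (rule expvecs_bnd)
      have nz: "nzc x y rest < nzc x y ps" using g(2) unfolding ps rest_def by simp
      define c1 where "c1 = int_pow L m"
      define K where "K = nat (- ell x y u)"
      have GPps: "GP L ps = geo c1 v * GP L rest" unfolding ps rest_def c1_def by (rule GP_remove)
      have "mon c u * GP L ps = mon c u * ((\<Sum>i<K. mon (c1 ^ i) (\<lambda>j. i * v j)) + mon (c1 ^ K) (\<lambda>j. K * v j) * geo c1 v) * GP L rest"
        unfolding GPps using geo_rest[OF vb ok(3), of c1 K] by simp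
      also have "\<dots> = (\<Sum>i<K. mon c u * mon (c1 ^ i) (\<lambda>j. i * v j) * GP L rest) + mon c u * mon (c1 ^ K) (\<lambda>j. K * v j) * GP L ps"
        unfolding GPps by (simp add: algebra_simps sum_distrib_left sum_distrib_right)
      also have "\<dots> = (\<Sum>i<K. mon (c * c1 ^ i) (\<lambda>j. u j + i * v j) * GP L rest) + mon (c * c1 ^ K) (\<lambda>j. u j + K * v j) * GP L ps"
        using ub vb by (simp add: mono_mult bnd_smult)
      finally have eq: "mon c u * GP L ps = \<dots>" .
      have "Ig r L (restr (H x y) (mon (c * c1 ^ i) (\<lambda>j. u j + i * v j) * GP L rest))" for i
        using IH[OF nz ok(4)] less.prems(2) ok(2) by (simp add: expvecs_smult)
      then have I1: "Ig r L (\<Sum>i<K. restr (H x y) (mon (c * c1 ^ i) (\<lambda>j. u j + i * v j) * GP L rest))"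
        by (intro Ig_sum)
      have "sge x y (ell x y (\<lambda>j. u j + K * v j) + 0) (mon (c * c1 ^ K) (\<lambda>j. u j + K * v j) * GP L ps)"
        by (intro sge_mult sge_mono sge_GP allp)
      moreover have "0 \<le> ell x y (\<lambda>j. u j + K * v j)"
      proof -
        have "int K * 1 \<le> int K * ell x y v" using g(2) by (intro mult_left_mono) auto
        moreover have "- ell x y u \<le> int K" unfolding K_def by simp
        ultimately show ?thesis by simp
      qed
      ultimately have "sge x y 0 (mon (c * c1 ^ K) (\<lambda>j. u j + K * v j) * GP L ps)"
        by (auto intro: sge_weaken)
      then have I2: "Ig r L (restr (H x y) (mon (c * c1 ^ K) (\<lambda>j. u j + K * v j) * GP L ps))"
        using less.prems ok(2) by (simp add: restr_H_id Ig_mult Ig_mono Ig_GP expvecs_smult)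
      show ?thesis unfolding eq restr_add restr_sum using I1 I2 by (rule Ig_add)
    qed
  next
    case False
    then have alln: "\<forall>(m,v)\<in>set ps. ell x y v \<le> 0" by auto
    show ?thesis
    proof (cases "\<exists>g\<in>set ps. ell x y (snd g) < 0")
      case True
      obtain m v where g: "(m,v) \<in> set ps" "ell x y v < 0" using True by auto
      obtain xs ys where ps: "ps = xs @ (m,v) # ys" using split_list[OF g(1)] by blast
      define rest where "rest = xs @ ys"
      have ok: "m < 0" "v \<in> expvecs r" "v \<noteq> zv" "okp r rest"
        using less.prems(1) unfolding ps rest_def by auto
      have vb: "bnd v" using ok(2) by (rule expvecs_bnd)
      have nz: "nzc x y rest < nzc x y ps" using g(2) unfolding ps rest_def by simp
      define c1 where "c1 = int_pow L m"
      define K where "K = nat (ell x y u) + 1"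
      have GPps: "GP L ps = geo c1 v * GP L rest" unfolding ps rest_def c1_def by (rule GP_remove)
      have "mon c u * GP L ps = mon c u * ((\<Sum>i<K. mon (c1 ^ i) (\<lambda>j. i * v j)) + mon (c1 ^ K) (\<lambda>j. K * v j) * geo c1 v) * GP L rest"
        unfolding GPps using geo_rest[OF vb ok(3), of c1 K] by simp
      also have "\<dots> = (\<Sum>i<K. mon c u * mon (c1 ^ i) (\<lambda>j. i * v j) * GP L rest) + mon c u * mon (c1 ^ K) (\<lambda>j. K * v j) * GP L ps"
        unfolding GPps by (simp add: algebra_simps sum_distrib_left sum_distrib_right)
      also have "\<dots> = (\<Sum>i<K. mon (c * c1 ^ i) (\<lambda>j. u j + i * v j) * GP L rest) + mon (c * c1 ^ K) (\<lambda>j. u j + K * v j) * GP L ps"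
        using ub vb by (simp add: mono_mult bnd_smult)
      finally have eq: "mon c u * GP L ps = \<dots>" .
      have "Ig r L (restr (H x y) (mon (c * c1 ^ i) (\<lambda>j. u j + i * v j) * GP L rest))" for i
        using IH[OF nz ok(4)] less.prems(2) ok(2) by (simp add: expvecs_smult)
      then have I1: "Ig r L (\<Sum>i<K. restr (H x y) (mon (c * c1 ^ i) (\<lambda>j. u j + i * v j) * GP L rest))"
        by (intro Ig_sum)
      have "sle x y (ell x y (\<lambda>j. u j + K * v j) + 0) (mon (c * c1 ^ K) (\<lambda>j. u j + K * v j) * GP L ps)"
        by (intro sle_mult sle_mono sle_GP alln)
      moreover have "ell x y (\<lambda>j. u j + K * v j) < 0"
      proof -
        have "int K * ell x y v \<le> int K * (- 1)" using g(2) by (intro mult_left_mono) auto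
        moreover have "ell x y u < int K" unfolding K_def by simp
        ultimately show ?thesis by simp
      qed
      ultimately have "restr (H x y) (mon (c * c1 ^ K) (\<lambda>j. u j + K * v j) * GP L ps) = 0"
        by (intro restr_H_0) auto
      then have I2: "Ig r L (restr (H x y) (mon (c * c1 ^ K) (\<lambda>j. u j + K * v j) * GP L ps))"
        by (simp add: Ig_zero)
      show ?thesis unfolding eq restr_add restr_sum using I1 I2 by (rule Ig_add)
    next
      case False
      then have allz: "\<forall>(m,v)\<in>set ps. ell x y v = 0" using alln by fastforce
      then have a1: "\<forall>(m,v)\<in>set ps. 0 \<le> ell x y v" and a2: "\<forall>(m,v)\<in>set ps. ell x y v \<le> 0" by auto
      have s1: "sge x y (ell x y u + 0) (mon c u * GP L ps)"
        by (intro sge_mult sge_mono sge_GP a1)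
      have s2: "sle x y (ell x y u + 0) (mon c u * GP L ps)"
        by (intro sle_mult sle_mono sle_GP a2)
      show ?thesis
      proof (cases "0 \<le> ell x y u")
        case True
        then have "restr (H x y) (mon c u * GP L ps) = mon c u * GP L ps"
          using s1 by (intro restr_H_id) (auto intro: sge_weaken)
        then show ?thesis using less.prems by (simp add: Ig_mult Ig_mono Ig_GP)
      next
        case False
        then have "restr (H x y) (mon c u * GP L ps) = 0"
          using s2 by (intro restr_H_0[of x y "ell x y u"]) auto
        then show ?thesis by (simp add: Ig_zero)
      qed
    qed
  qed
qed



lemma Ig_restr_H: assumes "rs r A" "Ig r L A" shows "Ig r L (restr (H x y) A)"
proof -
  obtain P ps where P: "rs r P" "fin P" "okp r ps" "A * DP L ps = P" using assms(2) by (auto simp: Ig_def)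
  have "A = A * (DP L ps * GP L ps)" using DP_GP[OF P(3), where L=L] by simp
  also have "\<dots> = P * GP L ps" using P(4) by (simp add: mult.assoc[symmetric])
  also have "\<dots> = (\<Sum>u\<in>{n. coeff P n \<noteq> 0}. mon (coeff P u) u * GP L ps)"
    by (subst ser_expand[OF P(2)]) (simp add: sum_distrib_right)
  finally have eq: "A = \<dots>" .
  have "u \<in> expvecs r" if "coeff P u \<noteq> 0" for u using P(1) that by (auto simp: rs_def)
  then show ?thesis unfolding eq restr_sum using P(3) by (intro Ig_sum core) auto
qed

definition good :: "nat \<Rightarrow> 'a::comm_ring_1 \<Rightarrow> (nat \<Rightarrow> nat) set \<Rightarrow> bool" where
  "good r L D \<longleftrightarrow> (\<forall>A. rs r A \<longrightarrow> Ig r L A \<longrightarrow> Ig r L (restr D A))"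

lemma good_H: "good r L (H x y)" by (simp add: good_def Ig_restr_H)
lemma good_UNIV: "good r L UNIV" by (simp add: good_def restr_UNIV)
lemma good_inter: "good r L D \<Longrightarrow> good r L E \<Longrightarrow> good r L (D \<inter> E)"
  unfolding good_def by (metis restr_restr rs_restr)
lemma good_compl: "good r L D \<Longrightarrow> good r L (- D)"
  unfolding good_def by (simp add: restr_compl Ig_minus)
lemma good_all: assumes "finite J" "\<And>j. j \<in> J \<Longrightarrow> good r L {m. P j m}"
  shows "good r L {m. \<forall>j\<in>J. P j m}"
  using assms
proof (induction J rule: finite_induct)
  case empty then show ?case by (simp add: good_UNIV)
next
  case (insert j J)
  have "{m. \<forall>j'\<in>insert j J. P j' m} = {m. P j m} \<inter> {m. \<forall>j'\<in>J. P j' m}" by auto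
  then show ?case using insert by (simp add: good_inter)
qed
lemma good_le: "good r L {m. m a \<le> m b}"
proof -
  have "H a b = {m. m a \<le> m b}" by (auto simp: H_def ell_def)
  then show ?thesis using good_H by metis
qed
lemma good_eq: "good r L {m. m a = m b}"
proof -
  have "{m::nat\<Rightarrow>nat. m a = m b} = {m. m a \<le> m b} \<inter> {m. m b \<le> m a}" by auto
  then show ?thesis by (simp add: good_inter good_le)
qed
lemma good_lt: "good r L {m. m a < m b}"
proof -
  have "{m::nat\<Rightarrow>nat. m a < m b} = - {m. m b \<le> m a}" by auto
  then show ?thesis by (simp add: good_compl good_le)
qed
lemma good_cong: assumes "good r L D" "\<And>n. n \<in> expvecs r \<Longrightarrow> n \<in> D \<longleftrightarrow> n \<in> E" shows "good r L E"
  unfolding good_def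
proof (intro allI impI)
  fix A :: "'a ser" assume A: "rs r A" "Ig r L A"
  have "restr E A = restr D A"
    by (rule ser_eqI) (use A(1) assms(2) in \<open>auto simp: coeff_restr rs_def\<close>)
  then show "Ig r L (restr E A)" using assms(1) A by (simp add: good_def)
qed

lemma good_cell: assumes "ordered_cell r D" shows "good r L D"
proof -
  obtain \<rho> rs where \<rho>: "\<rho> permutes {..<r}" and D: "D = (\<lambda>n. n \<circ> \<rho>) ` basic_cell r rs"
    using assms by (auto simp: ordered_cell_def)
  define \<sigma> where "\<sigma> = inv \<rho>"
  have \<sigma>p: "\<sigma> permutes {..<r}" unfolding \<sigma>_def using \<rho> by (rule permutes_inv)
  define F1 where "F1 = {(j,i). 1 \<le> j \<and> j < length rs \<and> rs ! (j - 1) < i \<and> i \<le> rs ! j}"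
  define F2 where "F2 = {j. 2 \<le> j \<and> j < length rs}"
  define E :: "(nat \<Rightarrow> nat) set" where "E = {m. \<forall>(j,i)\<in>F1. m (\<sigma> (i - 1)) = m (\<sigma> (rs ! j - 1))} \<inter>
                      {m. \<forall>j\<in>F2. m (\<sigma> (rs ! (j - 1) - 1)) < m (\<sigma> (rs ! j - 1))}"
  have fF1: "finite F1"
  proof (rule finite_subset)
    show "F1 \<subseteq> {..<length rs} \<times> {..Max (set rs)}"
    proof
      fix z assume "z \<in> F1"
      then obtain j i where z: "z = (j,i)" "j < length rs" "i \<le> rs ! j" by (auto simp: F1_def)
      have "rs ! j \<le> Max (set rs)" using z(2) by (intro Max_ge) auto
      then show "z \<in> {..<length rs} \<times> {..Max (set rs)}" using z by (auto intro: le_trans)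
    qed
  qed simp
  have fF2: "finite F2" by (simp add: F2_def)
  have gE: "good r L E" unfolding E_def
    by (intro good_inter good_all[OF fF1] good_all[OF fF2]) (auto simp: good_eq good_lt split: prod.splits)
  show ?thesis
  proof (rule good_cong[OF gE])
    fix m assume m: "m \<in> expvecs r"
    have mc: "(m \<circ> \<sigma>) \<in> expvecs r"
      using m permutes_not_in[OF \<sigma>p] by (auto simp: expvecs_def)
    have "m \<in> D \<longleftrightarrow> m \<circ> \<sigma> \<in> basic_cell r rs"
    proof
      assume "m \<in> D"
      then obtain n where "n \<in> basic_cell r rs" "m = n \<circ> \<rho>" using D by auto
      moreover have "n \<circ> \<rho> \<circ> \<sigma> = n" unfolding \<sigma>_def using permutes_inverses(1)[OF \<rho>] by (auto simp: fun_eq_iff)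
      ultimately show "m \<circ> \<sigma> \<in> basic_cell r rs" by simp
    next
      assume "m \<circ> \<sigma> \<in> basic_cell r rs"
      moreover have "m = m \<circ> \<sigma> \<circ> \<rho>" unfolding \<sigma>_def using permutes_inverses(2)[OF \<rho>] by (auto simp: fun_eq_iff)
      ultimately show "m \<in> D" unfolding D by blast
    qed
    also have "\<dots> \<longleftrightarrow> m \<in> E"
      using mc unfolding basic_cell_def E_def F1_def F2_def by auto
    finally show "m \<in> E \<longleftrightarrow> m \<in> D" by simp
  qed
qed



lift_definition ofs :: "((nat \<Rightarrow> nat) \<Rightarrow> 'a::zero) \<Rightarrow> 'a ser" is
  "\<lambda>a n. if bnd n then a n else 0" by auto

lemma coeff_ofs: "is_series r a \<Longrightarrow> coeff (ofs a) = a"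
  by transfer (auto simp: is_series_def fun_eq_iff dest: expvecs_bnd)
lemma ofs_coeff: "ofs (coeff A) = A"
  by (rule ser_eqI) (simp add: ofs.rep_eq coeff_nbnd)
lemma rs_iff: "rs r A \<longleftrightarrow> is_series r (coeff A)" by (simp add: rs_def is_series_def)

lemma ps_times_ofs: assumes "is_series r a" "is_series r b"
  shows "ps_times r a b = coeff (ofs a * ofs b)"
proof
  fix n
  show "ps_times r a b n = coeff (ofs a * ofs b) n"
  proof (cases "n \<in> expvecs r")
    case True
    have "{p \<in> expvecs r. \<forall>i. p i \<le> n i} = dv n"
    proof (rule set_eqI, rule iffI)
      fix p assume "p \<in> dv n"
      then have "\<forall>i. p i \<le> n i" by (simp add: dv_def)
      moreover have "\<forall>i\<ge>r. p i = 0"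
      proof (intro allI impI)
        fix i assume "r \<le> i"
        then have "n i = 0" using True by (simp add: expvecs_def)
        then show "p i = 0" using \<open>\<forall>i. p i \<le> n i\<close> by (metis le_zero_eq)
      qed
      ultimately show "p \<in> {p \<in> expvecs r. \<forall>i. p i \<le> n i}" by (simp add: expvecs_def)
    qed (simp add: dv_def)
    then show ?thesis using True
      by (simp add: ps_times_def coeff_times coeff_ofs[OF assms(1)] coeff_ofs[OF assms(2)] expvecs_bnd)
  next
    case False
    have "coeff (ofs a * ofs b) n = 0"
    proof (rule ccontr)
      assume "coeff (ofs a * ofs b) n \<noteq> 0"
      then obtain p where p: "\<forall>i. p i \<le> n i" "coeff (ofs a) p \<noteq> 0" "coeff (ofs b) (\<lambda>i. n i - p i) \<noteq> 0"
        using prod_nz by blast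
      have "rs r (ofs a * ofs b)" using assms by (intro rs_mult) (simp_all add: rs_iff coeff_ofs)
      then show False using False \<open>coeff (ofs a * ofs b) n \<noteq> 0\<close> by (simp add: rs_def)
    qed
    then show ?thesis using False by (simp add: ps_times_def)
  qed
qed

lemma series_ps_times: "is_series r (ps_times r a b)" by (simp add: is_series_def ps_times_def)

lemma ofs_denom_factor: assumes "v \<in> expvecs r"
  shows "ofs (denom_factor L m v) = 1 - mon (int_pow L m) v"
  using expvecs_bnd[OF assms]
  by (intro ser_eqI) (auto simp: ofs.rep_eq denom_factor_def ps_one_def coeff_minus coeff_one coeff_mono)

lemma series_denom_factor: "v \<in> expvecs r \<Longrightarrow> is_series r (denom_factor L m v)"
  by (auto simp: is_series_def denom_factor_def ps_one_def)

lemma denom_prod_eq: "okp r ps \<Longrightarrow> denom_prod r L ps = coeff (DP L ps)"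
proof (induction ps)
  case Nil
  show ?case by (simp add: denom_prod_def fun_eq_iff coeff_one ps_one_def)
next
  case (Cons g ps)
  obtain m v where g: "g = (m,v)" by (cases g)
  have ok: "v \<in> expvecs r" "okp r ps" using Cons.prems g by auto
  have "denom_prod r L (g # ps) = ps_times r (denom_factor L m v) (denom_prod r L ps)"
    by (simp add: denom_prod_def g)
  also have "\<dots> = ps_times r (denom_factor L m v) (coeff (DP L ps))" using Cons.IH ok by simp
  also have "\<dots> = coeff (ofs (denom_factor L m v) * ofs (coeff (DP L ps)))"
  proof (rule ps_times_ofs)
    show "is_series r (denom_factor L m v)" using ok(1) by (rule series_denom_factor)
    have "rs r (DP L ps)" using ok(2) by (rule rs_DP)
    then show "is_series r (coeff (DP L ps))" by (simp add: rs_iff)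
  qed
  also have "\<dots> = coeff (DP L (g # ps))" using ok by (simp add: ofs_coeff ofs_denom_factor g)
  finally show ?case .
qed

lemma integrable_iff: assumes "is_series r a" shows "integrable r L a \<longleftrightarrow> Ig r L (ofs a)"
proof
  assume "integrable r L a"
  then obtain P ps where P: "is_series r P" "finite {n. P n \<noteq> 0}" "okp r ps"
    "ps_times r a (denom_prod r L ps) = P"
    unfolding integrable_def okp_def by blast
  have "coeff (ofs a * DP L ps) = P"
    using P(4) ps_times_ofs[OF assms, of "denom_prod r L ps"] denom_prod_eq[OF P(3), of L]
    by (simp add: ofs_coeff rs_iff[symmetric] rs_DP[OF P(3), where L=L])
  then have "ofs (coeff (ofs a * DP L ps)) = ofs P" by simp
  then have "ofs a * DP L ps = ofs P" by (simp only: ofs_coeff)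
  then show "Ig r L (ofs a)" unfolding Ig_def using P
    by (intro exI[of _ "ofs P"] exI[of _ ps]) (simp add: rs_iff fin_def coeff_ofs)
next
  assume "Ig r L (ofs a)"
  then obtain P ps where P: "rs r P" "fin P" "okp r ps" "ofs a * DP L ps = P" by (auto simp: Ig_def)
  have "ps_times r a (denom_prod r L ps) = coeff P"
    using P(4) ps_times_ofs[OF assms, of "denom_prod r L ps"] denom_prod_eq[OF P(3), of L]
    by (simp add: ofs_coeff rs_iff[symmetric] rs_DP[OF P(3), where L=L])
  then show "integrable r L a" unfolding integrable_def using P
    by (intro exI[of _ "coeff P"] exI[of _ ps]) (simp add: rs_iff fin_def okp_def)
qed

lemma series_restrict: "is_series r a \<Longrightarrow> is_series r (restrict_series D a)"
  by (simp add: is_series_def restrict_series_def)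
lemma ofs_restrict: "ofs (restrict_series D a) = restr D (ofs a)"
  by (rule ser_eqI) (simp add: ofs.rep_eq coeff_restr restrict_series_def)

theorem lemma5p6:
  fixes L :: "'a::comm_ring_1" and r :: nat and a :: "(nat \<Rightarrow> nat) \<Rightarrow> 'a" and D :: "(nat \<Rightarrow> nat) set"
  assumes "L dvd 1"
    and "\<forall>n::nat. n \<ge> 1 \<longrightarrow> (1 - L ^ n) dvd 1"
    and "is_series r a"
    and "integrable r L a"
    and "ordered_cell r D"
  shows "integrable r L (restrict_series D a)"
proof -
  have I: "Ig r L (ofs a)" using assms(4) integrable_iff[OF assms(3)] by simp
  have rsa: "rs r (ofs a)" using assms(3) by (simp add: rs_iff coeff_ofs)
  have "Ig r L (restr D (ofs a))" using good_cell[OF assms(5), of L] I rsa by (simp add: good_def)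
  then show ?thesis using integrable_iff[OF series_restrict[OF assms(3)]] by (simp add: ofs_restrict)
qed

end
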